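(* Assume $\mathbb{P}$ satisfies C1 and C2, and let $L>L_{\mathbb{P}}(\bar g)$. For all $\epsilon,\gamma>0$ and all $n$, except with probability at most $\Lambda_n(L)+\mathcal{N}(\mathfrak{D},\epsilon)\,\Gamma_n(\gamma)$: (a) if $g$ satisfies A1–A4 or $(g,\mathfrak{D})$ satisfy B1–B4, then $\sup_{D\in\mathfrak{D}}|F_X(D)-\mathbb{E}f_x(D)|\le 2L\epsilon+\gamma$; (b) if $(g,\mathfrak{D})$ satisfy B1–B3 (with constant $\kappa$), then $\sup_{D\in\mathfrak{D}}|F_X(D)-\mathbb{E}f_x(D)|\le2L\epsilon\big(1+\epsilon/\sqrt\kappa\big)+\gamma$.
   Context: A penalty is $g:\mathbb{R}^d\to\mathbb{R}\cup\{+\infty\}$; $\mathfrak{D}\subset\mathbb{R}^{m\times d}$. $\mathcal{L}_x(D,\alpha)=\tfrac12\|x-D\alpha\|_2^2+g(\alpha)$, $f_x(D)=\inf_\alpha\mathcal{L}_x(D,\alpha)$, $F_X(D)=\frac1n\sum_i f_{x_i}(D)$. $\|\Delta\|_{1\to2}=\max_j\|\delta_j\|_2$. A1: $g\ge0$; A2: $g$ lower semi-continuous; A3: $g(\alpha)\to+\infty$ as $\|\alpha\|\to\infty$; A4: $g(0)=0$. B1: $g=\chi_{\mathcal K}$ (indicator of $\mathcal K$); B2: there is $\kappa>0$ with $\kappa\|\alpha\|_1^2\le\|D\alpha\|_2^2$ for $\alpha\in\mathcal K$, $D\in\mathfrak{D}$; B3: $0\in\mathcal K$; B4: $\mathfrak{D}$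 convex. $\bar g(t)=\sup\{\|\alpha\|_1:g(\alpha)\le t\}$ under A1–A4, $\bar g(t)=2\sqrt{2t/\kappa}$ under B1–B3. $L_X(\bar g)=\frac1n\sum_i\|x_i\|_2\bar g(\|x_i\|_2^2/2)$. $\mathbb{P}$ is a distribution on $\mathbb{R}^m$, $x_1,\dots,x_n$ i.i.d. $\sim\mathbb{P}$, $X=[x_1,\dots,x_n]$. $L_{\mathbb{P}}(\bar g)=\mathbb{E}\|x\|_2\bar g(\|x\|_2^2/2)$. $\Lambda_n(L)=\mathbb{P}(L_X(\bar g)>L)$, $\Gamma_n(\gamma)=\sup_{D\in\mathfrak{D}}\mathbb{P}(|F_X(D)-\mathbb{E}f_x(D)|>\gamma)$. C1: $L_{\mathbb{P}}(\bar g)<\infty$. C2: there are $c>0$, $T\in(0,\infty]$ with $\Gamma_n(c\tau)\le2e^{-n\tau^2}$ for all $0\le\tau\le T$ and all $n$. $\mathcal{N}(\mathfrak{D},\epsilon)$ is the minimal cardinality of $\mathfrak{Q}\subset\mathfrak{D}$ such that each $D\in\mathfrak{D}$ has some $q\in\mathfrak{Q}$ with $\|D-q\|_{1\to2}\le\epsilon$. *)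

theory Defs
  imports "HOL-Analysis.Analysis" "HOL-Probability.Probability"
begin

text \<open>Vectors alpha in R^d are real^'d, signals x in R^m are real^'m,
  dictionaries D in R^(m x d) are real^'d^'m (m rows, d columns), so D *v alpha is in R^m.
  Penalties take values in ereal (to allow +infinity).\<close>

definition l1norm :: "real^'d \<Rightarrow> real" where
  "l1norm \<alpha> = (\<Sum>j\<in>UNIV. \<bar>\<alpha> $ j\<bar>)"

text \<open>The 1-to-2 operator norm: maximal Euclidean norm of a column.\<close>
definition norm12 :: "real^'d^'m \<Rightarrow> real" where
  "norm12 \<Delta> = Max (range (\<lambda>j. norm (column j \<Delta>)))"

definition lossL :: "real^'m \<Rightarrow> real^'d^'m \<Rightarrow> (real^'d \<Rightarrow> ereal) \<Rightarrow> real^'d \<Rightarrow> ereal" where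
  "lossL x D g \<alpha> = ereal (1/2 * (norm (x - D *v \<alpha>))^2) + g \<alpha>"

definition fx :: "(real^'d \<Rightarrow> ereal) \<Rightarrow> real^'m \<Rightarrow> real^'d^'m \<Rightarrow> real" where
  "fx g x D = real_of_ereal (INF \<alpha>. lossL x D g \<alpha>)"

definition FX :: "(real^'d \<Rightarrow> ereal) \<Rightarrow> nat \<Rightarrow> (nat \<Rightarrow> real^'m) \<Rightarrow> real^'d^'m \<Rightarrow> real" where
  "FX g n X D = (\<Sum>i<n. fx g (X i) D) / real n"

definition Ef :: "(real^'m) measure \<Rightarrow> (real^'d \<Rightarrow> ereal) \<Rightarrow> real^'d^'m \<Rightarrow> real" where
  "Ef P g D = (\<integral>x. fx g x D \<partial>P)"

definition sampleM :: "(real^'m) measure \<Rightarrow> nat \<Rightarrow> (nat \<Rightarrow> real^'m) measure" where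
  "sampleM P n = PiM {..<n} (\<lambda>_. P)"

definition gbarA :: "(real^'d \<Rightarrow> ereal) \<Rightarrow> real \<Rightarrow> real" where
  "gbarA g t = Sup {l1norm \<alpha> | \<alpha>. g \<alpha> \<le> ereal t}"

definition gbarB :: "real \<Rightarrow> real \<Rightarrow> real" where
  "gbarB \<kappa> t = 2 * sqrt (2 * t / \<kappa>)"

definition LX :: "(real \<Rightarrow> real) \<Rightarrow> nat \<Rightarrow> (nat \<Rightarrow> real^'m) \<Rightarrow> real" where
  "LX gbar n X = (\<Sum>i<n. norm (X i) * gbar ((norm (X i))^2 / 2)) / real n"

definition LP :: "(real^'m) measure \<Rightarrow> (real \<Rightarrow> real) \<Rightarrow> ennreal" where
  "LP P gbar = (\<integral>\<^sup>+ x. ennreal (norm x * gbar ((norm x)^2 / 2)) \<partial>P)"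

definition Lambda_n :: "(real^'m) measure \<Rightarrow> (real \<Rightarrow> real) \<Rightarrow> nat \<Rightarrow> real \<Rightarrow> ennreal" where
  "Lambda_n P gbar n L = emeasure (sampleM P n) {X \<in> space (sampleM P n). LX gbar n X > L}"

definition Gamma_n :: "(real^'m) measure \<Rightarrow> (real^'d \<Rightarrow> ereal) \<Rightarrow> (real^'d^'m) set \<Rightarrow> nat \<Rightarrow> real \<Rightarrow> ennreal" where
  "Gamma_n P g \<D> n \<gamma> = (SUP D\<in>\<D>. emeasure (sampleM P n)
      {X \<in> space (sampleM P n). \<bar>FX g n X D - Ef P g D\<bar> > \<gamma>})"

text \<open>Covering number (infinite if no finite epsilon-net exists).\<close>
definition covN :: "(real^'d^'m) set \<Rightarrow> real \<Rightarrow> ennreal" where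
  "covN \<D> \<epsilon> = (INF Q\<in>{Q. finite Q \<and> Q \<subseteq> \<D> \<and> (\<forall>D\<in>\<D>. \<exists>q\<in>Q. norm12 (D - q) \<le> \<epsilon>)}.
      of_nat (card Q))"

definition lsc :: "('a::topological_space \<Rightarrow> ereal) \<Rightarrow> bool" where
  "lsc g \<longleftrightarrow> (\<forall>a. g a \<le> Liminf (at a) g)"

definition condA :: "(real^'d \<Rightarrow> ereal) \<Rightarrow> bool" where
  "condA g \<longleftrightarrow> (\<forall>\<alpha>. g \<alpha> \<ge> 0) \<and> lsc g \<and> (g \<longlongrightarrow> \<infinity>) at_infinity \<and> g 0 = 0"

definition indicatorE :: "'a set \<Rightarrow> 'a \<Rightarrow> ereal" where
  "indicatorE K \<alpha> = (if \<alpha> \<in> K then 0 else \<infinity>)"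

definition condB123 :: "(real^'d \<Rightarrow> ereal) \<Rightarrow> (real^'d^'m) set \<Rightarrow> real \<Rightarrow> (real^'d) set \<Rightarrow> bool" where
  "condB123 g \<D> \<kappa> K \<longleftrightarrow> \<kappa> > 0 \<and> g = indicatorE K
     \<and> (\<forall>\<alpha>\<in>K. \<forall>D\<in>\<D>. \<kappa> * (l1norm \<alpha>)^2 \<le> (norm (D *v \<alpha>))^2)
     \<and> 0 \<in> K"

definition condC2 :: "(real^'m) measure \<Rightarrow> (real^'d \<Rightarrow> ereal) \<Rightarrow> (real^'d^'m) set \<Rightarrow> bool" where
  "condC2 P g \<D> \<longleftrightarrow> (\<exists>c>0. \<exists>T::ereal. T > 0 \<and>
     (\<forall>n \<tau>. 0 \<le> \<tau> \<and> ereal \<tau> \<le> T \<longrightarrow> Gamma_n P g \<D> n (c * \<tau>) \<le> ennreal (2 * exp (- real n * \<tau>^2))))"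

text \<open>"Except with probability at most p, property Q holds for the sample X".\<close>
definition except_prob :: "(nat \<Rightarrow> real^'m) measure \<Rightarrow> ennreal \<Rightarrow> ((nat \<Rightarrow> real^'m) \<Rightarrow> bool) \<Rightarrow> bool" where
  "except_prob M p Q \<longleftrightarrow> (\<exists>E\<in>sets M. emeasure M E \<le> p \<and> (\<forall>X\<in>space M - E. Q X))"

end

theory Submission
  imports Defs
begin



lemma norm12_nonneg: "0 \<le> norm12 (A::real^'d^'m)"
proof -
  obtain j :: 'd where True by simp
  have "norm (column j A) \<le> norm12 A" unfolding norm12_def by (rule Max_ge) auto
  thus ?thesis using norm_ge_zero order_trans by blast
qed

lemma column_le_norm12: "norm (column j A) \<le> norm12 (A::real^'d^'m)"
  unfolding norm12_def by (rule Max_ge) auto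

lemma mv_bound: "norm ((A::real^'d^'m) *v a) \<le> norm12 A * l1norm a"
proof -
  have "norm (A *v a) = norm (\<Sum>j\<in>UNIV. (a$j) *s column j A)" by (simp add: matrix_mult_sum)
  also have "\<dots> \<le> (\<Sum>j\<in>UNIV. norm ((a$j) *s column j A))" by (rule norm_sum)
  also have "\<dots> = (\<Sum>j\<in>UNIV. \<bar>a$j\<bar> * norm (column j A))"
    by (simp add: scalar_mult_eq_scaleR)
  also have "\<dots> \<le> (\<Sum>j\<in>UNIV. \<bar>a$j\<bar> * norm12 A)"
    by (intro sum_mono mult_left_mono column_le_norm12) auto
  also have "\<dots> = norm12 A * l1norm a" by (simp add: l1norm_def sum_distrib_left mult.commute)
  finally show ?thesis .
qed

lemma norm12_le_norm: "norm12 (A::real^'d^'m) \<le> norm A"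
proof -
  have "norm (column j A) \<le> norm A" for j
  proof -
    have "norm (column j A) = L2_set (\<lambda>i. norm (A$i$j)) UNIV"
      by (simp add: norm_vec_def column_def)
    also have "\<dots> \<le> L2_set (\<lambda>i. norm (A$i)) UNIV"
      by (rule L2_set_mono) (auto simp: component_le_norm_cart)
    finally show ?thesis by (simp add: norm_vec_def)
  qed
  thus ?thesis unfolding norm12_def by (auto intro: Max.boundedI)
qed

lemma norm12_commute: "norm12 ((A::real^'d^'m) - B) = norm12 (B - A)"
proof -
  have "column j (A - B) = - column j (B - A)" for j by (simp add: column_def vec_eq_iff)
  thus ?thesis unfolding norm12_def by (simp add: norm_minus_cancel)
qed

lemma l1norm_nonneg: "0 \<le> l1norm a" unfolding l1norm_def by (simp add: sum_nonneg)

lemma l1norm_le: "l1norm (a::real^'d) \<le> real CARD('d) * norm a"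
proof -
  have "l1norm a \<le> (\<Sum>j\<in>(UNIV::'d set). norm a)" unfolding l1norm_def
    by (intro sum_mono component_le_norm_cart)
  thus ?thesis by simp
qed




definition gr :: "('a \<Rightarrow> ereal) \<Rightarrow> 'a \<Rightarrow> real" where "gr g a = real_of_ereal (g a)"

locale pen =
  fixes g :: "real^'d \<Rightarrow> ereal"
  assumes gnn: "\<And>a. g a \<ge> 0" and g0: "g 0 = 0"
begin

lemma loss_fin: "g a \<noteq> \<infinity> \<Longrightarrow> lossL x D g a = ereal (1/2 * (norm (x - D *v a))^2 + gr g a)"
  using gnn[of a] unfolding lossL_def gr_def
  by (cases "g a") auto

lemma INF_bounds:
  "0 \<le> (INF a. lossL x D g a)" "(INF a. lossL x D g a) \<le> ereal (1/2 * (norm x)^2)"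
proof -
  show "0 \<le> (INF a. lossL x D g a)"
    by (rule INF_greatest) (use gnn in \<open>auto simp: lossL_def intro!: add_nonneg_nonneg\<close>)
  have "(INF a. lossL x D g a) \<le> lossL x D g 0" by (rule INF_lower) auto
  also have "\<dots> = ereal (1/2 * (norm x)^2)" by (simp add: lossL_def g0)
  finally show "(INF a. lossL x D g a) \<le> ereal (1/2 * (norm x)^2)" .
qed

lemma fx_eq: "ereal (fx g x D) = (INF a. lossL x D g a)"
  using INF_bounds[of x D] unfolding fx_def
  by (cases "(INF a. lossL x D g a)") auto

lemma fx_nonneg: "0 \<le> fx g x D"
proof -
  have "ereal 0 \<le> ereal (fx g x D)" using INF_bounds(1)[of x D] fx_eq[of x D] by (simp add: zero_ereal_def)
  thus ?thesis by simp
qed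

lemma fx_le: "fx g x D \<le> 1/2 * (norm x)^2"
proof -
  have "ereal (fx g x D) \<le> ereal (1/2 * (norm x)^2)" using INF_bounds(2)[of x D] fx_eq[of x D] by simp
  thus ?thesis by simp
qed

lemma fx_upper: "g a \<noteq> \<infinity> \<Longrightarrow> fx g y D \<le> 1/2 * (norm (y - D *v a))^2 + gr g a"
proof -
  assume "g a \<noteq> \<infinity>"
  have "ereal (fx g y D) \<le> lossL y D g a" unfolding fx_eq by (rule INF_lower) auto
  hence "ereal (fx g y D) \<le> ereal (1/2 * (norm (y - D *v a))^2 + gr g a)"
    using loss_fin[OF \<open>g a \<noteq> \<infinity>\<close>, of y D] by metis
  thus ?thesis by simp
qed

lemma gr_nonneg: "0 \<le> gr g a" using gnn[of a] unfolding gr_def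
  by (simp add: real_of_ereal_pos)

lemma good_alpha:
  assumes "\<delta> > 0"
  shows "\<exists>a. g a \<noteq> \<infinity> \<and> 1/2 * (norm (x - D *v a))^2 + gr g a \<le> fx g x D + \<delta>
             \<and> 1/2 * (norm (x - D *v a))^2 + gr g a \<le> 1/2 * (norm x)^2"
proof (cases "fx g x D = 1/2 * (norm x)^2")
  case True
  show ?thesis
    by (rule exI[of _ 0]) (use True assms in \<open>simp add: g0 gr_def\<close>)
next
  case False
  with fx_le[of x D] have lt: "fx g x D < 1/2 * (norm x)^2" by simp
  define d where "d = min \<delta> (1/2 * (norm x)^2 - fx g x D)"
  have "d > 0" using lt assms by (simp add: d_def)
  hence "(INF a. lossL x D g a) < ereal (fx g x D + d)" by (simp flip: fx_eq)
  then obtain a where a: "lossL x D g a < ereal (fx g x D + d)" by (auto simp: INF_less_iff)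
  have fin: "g a \<noteq> \<infinity>" using a by (auto simp: lossL_def)
  from a have "1/2 * (norm (x - D *v a))^2 + gr g a < fx g x D + d" by (simp add: loss_fin[OF fin])
  thus ?thesis using fin by (intro exI[of _ a]) (auto simp: d_def)
qed

lemma step_gen:
  assumes E: "E \<ge> 0"
    and bnd: "\<And>a. g a \<noteq> \<infinity> \<Longrightarrow> 1/2 * (norm (x - D *v a))^2 + gr g a \<le> 1/2 * (norm x)^2
                   \<Longrightarrow> norm ((D' - D) *v a) \<le> E"
  shows "fx g y D' \<le> fx g x D + norm x * (norm (y - x) + E) + (norm (y - x) + E)^2 / 2"
proof (rule field_le_epsilon)
  fix \<delta> :: real assume "\<delta> > 0"
  then obtain a where fin: "g a \<noteq> \<infinity>"
    and a1: "1/2 * (norm (x - D *v a))^2 + gr g a \<le> fx g x D + \<delta>"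
    and a2: "1/2 * (norm (x - D *v a))^2 + gr g a \<le> 1/2 * (norm x)^2"
    using good_alpha by blast
  define u where "u = x - D *v a"
  define w where "w = (y - x) - (D' - D) *v a"
  define r where "r = norm (y - x) + E"
  have "norm ((D' - D) *v a) \<le> E" using bnd fin a2 by blast
  hence wr: "norm w \<le> r" unfolding w_def r_def using norm_triangle_ineq4 by (smt (verit))
  have "(norm u)^2 \<le> (norm x)^2" using a2 gr_nonneg[of a] unfolding u_def by linarith
  hence ux: "norm u \<le> norm x" using power2_le_imp_le norm_ge_zero by blast
  have yd: "y - D' *v a = u + w" by (simp add: u_def w_def algebra_simps)
  have "norm (u + w) \<le> norm u + r" using norm_triangle_ineq[of u w] wr by simp
  hence "(norm (u + w))^2 \<le> (norm u + r)^2" by (intro power_mono) auto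
  also have "\<dots> = (norm u)^2 + 2 * norm u * r + r^2" by (simp add: power2_sum)
  also have "\<dots> \<le> (norm u)^2 + 2 * norm x * r + r^2"
    using ux E by (intro add_mono mult_right_mono) (auto simp: r_def)
  finally have sq: "(norm (u + w))^2 \<le> (norm u)^2 + 2 * norm x * r + r^2" .
  have "fx g y D' \<le> 1/2 * (norm (y - D' *v a))^2 + gr g a" by (rule fx_upper[OF fin])
  also have "\<dots> \<le> 1/2 * (norm u)^2 + gr g a + norm x * r + r^2/2"
    using sq unfolding yd by simp
  also have "\<dots> \<le> fx g x D + \<delta> + norm x * r + r^2/2" using a1 by (simp add: u_def)
  finally show "fx g y D' \<le> fx g x D + norm x * (norm (y - x) + E) + (norm (y - x) + E)^2 / 2 + \<delta>"
    by (simp add: r_def)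
qed

lemma fx_cont: "continuous_on UNIV (\<lambda>x. fx g x D)"
proof -
  have "isCont (\<lambda>x. fx g x D) x" for x
  proof -
    have b: "\<bar>fx g y D - fx g x D\<bar> \<le> (norm x + norm y) * norm (y - x) + (norm (y - x))^2/2" for y
    proof -
      have 1: "fx g y D \<le> fx g x D + norm x * (norm (y - x) + 0) + (norm (y - x) + 0)^2 / 2"
        by (rule step_gen) auto
      have 2: "fx g x D \<le> fx g y D + norm y * (norm (x - y) + 0) + (norm (x - y) + 0)^2 / 2"
        by (rule step_gen) auto
      have "norm (x - y) = norm (y - x)" by (rule norm_minus_commute)
      thus ?thesis using 1 2 by (simp add: algebra_simps abs_le_iff) (smt (verit) norm_ge_zero mult_nonneg_nonneg)
    qed
    have "((\<lambda>y. (norm x + norm y) * norm (y - x) + (norm (y - x))^2/2) \<longlongrightarrow>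
             (norm x + norm x) * norm (x - x) + (norm (x - x))^2/2) (at x)"
      by (intro tendsto_intros) simp
    hence t: "((\<lambda>y. (norm x + norm y) * norm (y - x) + (norm (y - x))^2/2) \<longlongrightarrow> 0) (at x)" by simp
    have "((\<lambda>y. fx g y D - fx g x D) \<longlongrightarrow> 0) (at x)"
      by (rule Lim_null_comparison[OF _ t]) (use b in auto)
    thus ?thesis unfolding isCont_def by (simp add: LIM_zero_iff)
  qed
  thus ?thesis by (simp add: continuous_on_eq_continuous_at)
qed

end



context pen begin

lemma chain:
  assumes G: "G \<ge> 0"
    and bnd: "\<And>t a. 0 \<le> t \<Longrightarrow> t \<le> 1 \<Longrightarrow> g a \<noteq> \<infinity> \<Longrightarrow>
        1/2 * (norm (x - (D + t *\<^sub>R (q - D)) *v a))^2 + gr g a \<le> 1/2 * (norm x)^2 \<Longrightarrow> l1norm a \<le> G"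
  shows "fx g x q \<le> fx g x D + norm x * G * norm12 (q - D)"
proof -
  define e where "e = norm12 (q - D)"
  have e0: "e \<ge> 0" unfolding e_def by (rule norm12_nonneg)
  define Dt where "Dt t = D + t *\<^sub>R (q - D)" for t :: real
  have main: "fx g x q \<le> fx g x D + norm x * G * e + (G * e)^2 / 2 / real k" if k: "k \<ge> 1" for k :: nat
  proof -
    define c where "c = G * e / real k"
    have c0: "c \<ge> 0" unfolding c_def using G e0 by simp
    have "i \<le> k \<Longrightarrow> fx g x (Dt (real i / real k)) \<le> fx g x D + real i * (norm x * c + c^2/2)" for i
    proof (induction i)
      case 0 thus ?case by (simp add: Dt_def)
    next
      case (Suc i)
      hence IH: "fx g x (Dt (real i / real k)) \<le> fx g x D + real i * (norm x * c + c^2/2)" by simp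
      have "fx g x (Dt (real (Suc i) / real k)) \<le> fx g x (Dt (real i / real k)) + norm x * (norm (x - x) + c) + (norm (x - x) + c)^2 / 2"
      proof (rule step_gen[OF c0])
        fix a assume fin: "g a \<noteq> \<infinity>"
          and h: "1/2 * (norm (x - Dt (real i / real k) *v a))^2 + gr g a \<le> 1/2 * (norm x)^2"
        have t01: "0 \<le> real i / real k" "real i / real k \<le> 1" using Suc.prems by auto
        have la: "l1norm a \<le> G" using bnd[OF t01 fin] h by (simp add: Dt_def)
        have "Dt (real (Suc i) / real k) - Dt (real i / real k) = (1 / real k) *\<^sub>R (q - D)"
        proof -
          have "Dt b - Dt a' = (b - a') *\<^sub>R (q - D)" for b a' by (simp add: Dt_def scaleR_diff_left)
          moreover have "real (Suc i) / real k - real i / real k = 1 / real k" by (simp add: diff_divide_distrib[symmetric])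
          ultimately show ?thesis by simp
        qed
        hence "norm ((Dt (real (Suc i) / real k) - Dt (real i / real k)) *v a)
               = (1 / real k) * norm ((q - D) *v a)"
          by (simp flip: scaleR_matrix_vector_assoc)
        also have "\<dots> \<le> (1 / real k) * (e * l1norm a)"
          unfolding e_def by (intro mult_left_mono mv_bound) auto
        also have "\<dots> \<le> (1 / real k) * (e * G)"
          by (intro mult_left_mono la e0) auto
        finally show "norm ((Dt (real (Suc i) / real k) - Dt (real i / real k)) *v a) \<le> c"
          by (simp add: c_def mult.commute)
      qed
      with IH show ?case by (simp add: algebra_simps add_divide_distrib)
    qed
    from this[of k] k have "fx g x (Dt 1) \<le> fx g x D + real k * (norm x * c + c^2/2)" by simp
    moreover have "Dt 1 = q" by (simp add: Dt_def)
    moreover have "real k * (norm x * c + c^2/2) = norm x * G * e + (G * e)^2 / 2 / real k"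
      using k by (simp add: c_def field_simps power2_eq_square)
    ultimately show ?thesis by simp
  qed
  show ?thesis unfolding e_def[symmetric]
  proof (rule field_le_epsilon)
    fix r :: real assume r: "r > 0"
    define C where "C = (G * e)^2 / 2 + 1"
    have C: "C > 0" by (simp add: C_def add_nonneg_pos)
    obtain n :: nat where n: "n \<noteq> 0" "inverse (real n) < r / C"
      using real_arch_inverse[of "r / C"] r C by auto
    have "(G * e)^2 / 2 / real n \<le> C / real n"
      using n by (intro divide_right_mono) (auto simp: C_def)
    also have "\<dots> = C * inverse (real n)" by (simp add: field_simps)
    also have "\<dots> < C * (r / C)" using n C by (intro mult_strict_left_mono) auto
    also have "\<dots> = r" using C by simp
    finally show "fx g x q \<le> fx g x D + norm x * G * e + r"
      using main[of n] n by simp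
  qed
qed

lemma onestep:
  assumes G: "G \<ge> 0"
    and bnd: "\<And>a. g a \<noteq> \<infinity> \<Longrightarrow>
        1/2 * (norm (x - D *v a))^2 + gr g a \<le> 1/2 * (norm x)^2 \<Longrightarrow> l1norm a \<le> G"
  shows "fx g x q \<le> fx g x D + norm x * G * norm12 (q - D) + (G * norm12 (q - D))^2 / 2"
proof -
  have e0: "norm12 (q - D) \<ge> 0" by (rule norm12_nonneg)
  have "fx g x q \<le> fx g x D + norm x * (norm (x - x) + G * norm12 (q - D)) + (norm (x - x) + G * norm12 (q - D))^2 / 2"
  proof (rule step_gen)
    show "0 \<le> G * norm12 (q - D)" using G e0 by simp
    fix a assume "g a \<noteq> \<infinity>" "1/2 * (norm (x - D *v a))^2 + gr g a \<le> 1/2 * (norm x)^2"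
    hence la: "l1norm a \<le> G" using bnd by blast
    have "norm ((q - D) *v a) \<le> norm12 (q - D) * l1norm a" by (rule mv_bound)
    also have "\<dots> \<le> norm12 (q - D) * G" by (intro mult_left_mono la e0)
    finally show "norm ((q - D) *v a) \<le> G * norm12 (q - D)" by (simp add: mult.commute)
  qed
  thus ?thesis by (simp add: algebra_simps)
qed

end

lemma condA_pen: "condA g \<Longrightarrow> pen g"
  unfolding condA_def pen_def by auto

lemma condB_pen: "condB123 g \<D> \<kappa> K \<Longrightarrow> pen g"
  unfolding condB123_def pen_def indicatorE_def by auto

lemma condA_bdd:
  assumes "condA g"
  shows "bdd_above {l1norm a | a. g a \<le> ereal t}"
proof -
  have "(g \<longlongrightarrow> \<infinity>) at_infinity" using assms by (simp add: condA_def)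
  hence "eventually (\<lambda>a. ereal t < g a) at_infinity" by (simp add: tendsto_PInfty)
  then obtain b where b: "\<And>a. b \<le> norm a \<Longrightarrow> ereal t < g a" by (auto simp: eventually_at_infinity)
  have "l1norm a \<le> real CARD('a) * b" if "g a \<le> ereal t" for a :: "real^'a"
  proof -
    have "norm a < b" using b[of a] that by (meson leD leI)
    hence "real CARD('a) * norm a \<le> real CARD('a) * b" by simp
    thus ?thesis using l1norm_le[of a] by linarith
  qed
  thus ?thesis by (auto simp: bdd_above_def)
qed

lemma condA_G:
  assumes "condA g" "g a \<noteq> \<infinity>" "gr g a \<le> t"
  shows "l1norm a \<le> gbarA g t"
proof -
  have "g a = ereal (gr g a)" using assms(1,2) unfolding condA_def gr_def
    by (cases "g a") auto
  hence "g a \<le> ereal t" using assms(3) by simp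
  thus ?thesis unfolding gbarA_def by (intro cSup_upper condA_bdd[OF assms(1)]) auto
qed

lemma condA_gbar_nonneg:
  assumes "condA g" "t \<ge> 0" shows "0 \<le> gbarA g t"
proof -
  have "l1norm (0::real^'a) \<le> gbarA g t"
    using condA_G[OF assms(1), of 0 t] assms by (simp add: condA_def gr_def)
  thus ?thesis by (simp add: l1norm_def)
qed

lemma condA_gbar_mono:
  assumes "condA g" "0 \<le> s" "s \<le> t" shows "gbarA g s \<le> gbarA g t"
  unfolding gbarA_def
proof (rule cSup_subset_mono)
  show "{l1norm a |a. g a \<le> ereal s} \<noteq> {}" using assms by (auto simp: condA_def intro!: exI[of _ 0])
  show "bdd_above {l1norm a |a. g a \<le> ereal t}" by (rule condA_bdd[OF assms(1)])
  show "{l1norm a |a. g a \<le> ereal s} \<subseteq> {l1norm a |a. g a \<le> ereal t}"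
    using assms(3) by (force intro: order_trans)
qed

lemma condB_G:
  assumes B: "condB123 g \<D> \<kappa> K" and D: "D \<in> \<D>" and fin: "g a \<noteq> \<infinity>"
    and h: "1/2 * (norm (x - D *v a))^2 + gr g a \<le> 1/2 * (norm x)^2"
  shows "l1norm a \<le> gbarB \<kappa> ((norm x)^2 / 2)"
proof -
  have k: "\<kappa> > 0" and g: "g = indicatorE K" and b2: "\<forall>a\<in>K. \<forall>D\<in>\<D>. \<kappa> * (l1norm a)^2 \<le> (norm (D *v a))^2"
    using B by (auto simp: condB123_def)
  have aK: "a \<in> K" using fin g by (auto simp: indicatorE_def split: if_splits)
  have gr0: "gr g a = 0" using aK g by (simp add: gr_def indicatorE_def)
  have "(norm (x - D *v a))^2 \<le> (norm x)^2" using h gr0 by simp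
  hence n1: "norm (x - D *v a) \<le> norm x" using power2_le_imp_le norm_ge_zero by blast
  have "norm (D *v a) \<le> norm x + norm (x - D *v a)"
    using norm_triangle_ineq4[of x "x - D *v a"] by simp
  hence n2: "norm (D *v a) \<le> 2 * norm x" using n1 by simp
  have "sqrt (\<kappa> * (l1norm a)^2) \<le> sqrt ((norm (D *v a))^2)"
    using b2 aK D by (intro real_sqrt_le_mono) auto
  hence "sqrt \<kappa> * l1norm a \<le> norm (D *v a)"
    using l1norm_nonneg[of a] by (simp add: real_sqrt_mult)
  hence s: "sqrt \<kappa> * l1norm a \<le> 2 * norm x" using n2 by simp
  have "gbarB \<kappa> ((norm x)^2 / 2) = 2 * norm x / sqrt \<kappa>"
    unfolding gbarB_def by (simp add: real_sqrt_divide)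
  moreover have "l1norm a \<le> 2 * norm x / sqrt \<kappa>"
    using s k by (simp add: field_simps mult.commute)
  ultimately show ?thesis by simp
qed

lemma gbarB_nonneg: "\<kappa> > 0 \<Longrightarrow> t \<ge> 0 \<Longrightarrow> gbarB \<kappa> t \<ge> 0" by (simp add: gbarB_def)




lemma lipA:
  assumes A: "condA g" and e: "norm12 (D - q) \<le> \<epsilon>"
  shows "\<bar>fx g x D - fx g x q\<bar> \<le> norm x * gbarA g ((norm x)^2/2) * \<epsilon> * 1"
proof -
  interpret pen g by (rule condA_pen[OF A])
  define G where "G = gbarA g ((norm x)^2/2)"
  have G0: "G \<ge> 0" unfolding G_def by (rule condA_gbar_nonneg[OF A]) simp
  have bnd: "l1norm a \<le> G" if "g a \<noteq> \<infinity>" "1/2 * (norm (x - M *v a))^2 + gr g a \<le> 1/2 * (norm x)^2" for M a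
    unfolding G_def using that by (intro condA_G[OF A]) (auto intro: order_trans[rotated])
  have 1: "fx g x q \<le> fx g x D + norm x * G * norm12 (q - D)" by (rule chain[OF G0 bnd])
  have 2: "fx g x D \<le> fx g x q + norm x * G * norm12 (D - q)" by (rule chain[OF G0 bnd])
  have "norm x * G * norm12 (D - q) \<le> norm x * G * \<epsilon>"
    using e G0 by (intro mult_left_mono) auto
  with 1 2 show ?thesis by (simp add: G_def norm12_commute abs_le_iff)
qed

lemma lipB4:
  assumes B: "condB123 g \<D> \<kappa> K" and cv: "convex \<D>" and D: "D \<in> \<D>" and q: "q \<in> \<D>"
    and e: "norm12 (D - q) \<le> \<epsilon>"
  shows "\<bar>fx g x D - fx g x q\<bar> \<le> norm x * gbarB \<kappa> ((norm x)^2/2) * \<epsilon> * 1"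
proof -
  interpret pen g by (rule condB_pen[OF B])
  define G where "G = gbarB \<kappa> ((norm x)^2/2)"
  have G0: "G \<ge> 0" unfolding G_def using B by (intro gbarB_nonneg) (auto simp: condB123_def)
  have seg: "A + t *\<^sub>R (C - A) \<in> \<D>" if "A \<in> \<D>" "C \<in> \<D>" "0 \<le> t" "t \<le> 1" for A C t
  proof -
    have "(1 - t) *\<^sub>R A + t *\<^sub>R C \<in> \<D>" using cv that unfolding convex_def by auto
    moreover have "A + t *\<^sub>R (C - A) = (1 - t) *\<^sub>R A + t *\<^sub>R C" by (simp add: algebra_simps)
    ultimately show ?thesis by simp
  qed
  have 1: "fx g x q \<le> fx g x D + norm x * G * norm12 (q - D)"
    by (rule chain[OF G0]) (unfold G_def, rule condB_G[OF B seg[OF D q]], auto)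
  have 2: "fx g x D \<le> fx g x q + norm x * G * norm12 (D - q)"
    by (rule chain[OF G0]) (unfold G_def, rule condB_G[OF B seg[OF q D]], auto)
  have "norm x * G * norm12 (D - q) \<le> norm x * G * \<epsilon>"
    using e G0 by (intro mult_left_mono) auto
  with 1 2 show ?thesis by (simp add: G_def norm12_commute abs_le_iff)
qed

lemma lipB:
  assumes B: "condB123 g \<D> \<kappa> K" and D: "D \<in> \<D>" and q: "q \<in> \<D>"
    and e: "norm12 (D - q) \<le> \<epsilon>"
  shows "\<bar>fx g x D - fx g x q\<bar> \<le> norm x * gbarB \<kappa> ((norm x)^2/2) * \<epsilon> * (1 + \<epsilon> / sqrt \<kappa>)"
proof -
  interpret pen g by (rule condB_pen[OF B])
  have k: "\<kappa> > 0" using B by (simp add: condB123_def)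
  define G where "G = gbarB \<kappa> ((norm x)^2/2)"
  have G0: "G \<ge> 0" unfolding G_def using k by (intro gbarB_nonneg) auto
  have Geq: "G = 2 * norm x / sqrt \<kappa>" unfolding G_def gbarB_def by (simp add: real_sqrt_divide)
  have key: "(G * t)^2 / 2 = norm x * G * t * (t / sqrt \<kappa>)" for t
  proof -
    have h: "G/2 = norm x / sqrt \<kappa>" using Geq by simp
    have "(G * t)^2 / 2 = (G * t) * t * (G/2)" by (simp add: power2_eq_square)
    also have "\<dots> = norm x * G * t * (t / sqrt \<kappa>)" unfolding h by simp
    finally show ?thesis .
  qed
  define t where "t = norm12 (D - q)"
  have t0: "t \<ge> 0" unfolding t_def by (rule norm12_nonneg)
  have 1: "fx g x q \<le> fx g x D + norm x * G * t + (G * t)^2 / 2"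
    unfolding t_def norm12_commute[of D q]
    by (rule onestep[OF G0]) (unfold G_def, rule condB_G[OF B D], auto)
  have 2: "fx g x D \<le> fx g x q + norm x * G * t + (G * t)^2 / 2"
    unfolding t_def
    by (rule onestep[OF G0]) (unfold G_def, rule condB_G[OF B q], auto)
  have "norm x * G * t + (G * t)^2 / 2 = norm x * G * t * (1 + t / sqrt \<kappa>)"
    by (subst key) (simp add: algebra_simps)
  also have "\<dots> \<le> norm x * G * \<epsilon> * (1 + \<epsilon> / sqrt \<kappa>)"
    using t0 e k G0 unfolding t_def[symmetric]
    by (intro mult_mono mult_nonneg_nonneg add_mono divide_right_mono) auto
  finally show ?thesis using 1 2 by (simp add: G_def abs_le_iff)
qed




lemma int_lip_aux:
  fixes P :: "'a::euclidean_space measure" and f1 f2 \<phi> :: "'a \<Rightarrow> real"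
  assumes i1: "integrable P f1" and m2: "f2 \<in> borel_measurable P"
    and ip: "integrable P \<phi>" and Ip: "integral\<^sup>L P \<phi> \<le> L"
    and lip: "\<And>x. \<bar>f1 x - f2 x\<bar> \<le> \<phi> x * k" and k: "k \<ge> 0"
  shows "integrable P f2 \<and> \<bar>integral\<^sup>L P f1 - integral\<^sup>L P f2\<bar> \<le> L * k"
proof
  have ipk: "integrable P (\<lambda>x. \<phi> x * k)" using ip by simp
  show i2: "integrable P f2"
  proof (rule Bochner_Integration.integrable_bound[OF _ m2])
    show "integrable P (\<lambda>x. \<bar>f1 x\<bar> + \<phi> x * k)" using i1 ipk by simp
    show "AE x in P. norm (f2 x) \<le> norm (\<bar>f1 x\<bar> + \<phi> x * k)"
      using lip by (auto intro!: always_eventually) (smt (verit))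
  qed
  have "\<bar>integral\<^sup>L P f1 - integral\<^sup>L P f2\<bar> = \<bar>integral\<^sup>L P (\<lambda>x. f1 x - f2 x)\<bar>"
    using i1 i2 by simp
  also have "\<dots> \<le> integral\<^sup>L P (\<lambda>x. \<phi> x * k)"
    using Bochner_Integration.integral_norm_bound_integral[of P "\<lambda>x. f1 x - f2 x" "\<lambda>x. \<phi> x * k"] i1 i2 ipk lip by simp
  also have "\<dots> = integral\<^sup>L P \<phi> * k" by simp
  also have "\<dots> \<le> L * k" using Ip k by (rule mult_right_mono)
  finally show "\<bar>integral\<^sup>L P f1 - integral\<^sup>L P f2\<bar> \<le> L * k" .
qed

lemma int_lip:
  fixes P :: "'a::euclidean_space measure" and f1 f2 \<phi> :: "'a \<Rightarrow> real"
  assumes m1: "f1 \<in> borel_measurable P" and m2: "f2 \<in> borel_measurable P"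
    and mp: "\<phi> \<in> borel_measurable P" and pn: "\<And>x. 0 \<le> \<phi> x"
    and LP: "(\<integral>\<^sup>+ x. ennreal (\<phi> x) \<partial>P) < ennreal L"
    and lip: "\<And>x. \<bar>f1 x - f2 x\<bar> \<le> \<phi> x * k" and k: "k \<ge> 0"
  shows "\<bar>integral\<^sup>L P f1 - integral\<^sup>L P f2\<bar> \<le> L * k"
proof -
  have ip: "integrable P \<phi>"
    by (rule integrableI_nonneg[OF mp]) (use pn LP in \<open>auto intro: order.strict_trans\<close>)
  have "ennreal (integral\<^sup>L P \<phi>) < ennreal L"
    using LP nn_integral_eq_integral[OF ip] pn by simp
  hence Ip: "integral\<^sup>L P \<phi> \<le> L"
    using integral_nonneg_AE[of \<phi> P] pn by (simp add: ennreal_less_iff)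
  have L0: "L \<ge> 0"
  proof (rule ccontr)
    assume "\<not> L \<ge> 0"
    hence "ennreal L = 0" by (simp add: ennreal_neg)
    thus False using LP by simp
  qed
  show ?thesis
  proof (cases "integrable P f1 \<or> integrable P f2")
    case True
    thus ?thesis
    proof
      assume "integrable P f1"
      from int_lip_aux[OF this m2 ip Ip lip k] show ?thesis by simp
    next
      assume "integrable P f2"
      from int_lip_aux[OF this m1 ip Ip _ k] lip show ?thesis by (simp add: abs_minus_commute)
    qed
  next
    case False
    thus ?thesis using L0 k by (simp add: not_integrable_integral_eq)
  qed
qed




lemma countable_net:
  fixes \<D> :: "'a::{metric_space,second_countable_topology} set"
  assumes "e > 0"
  obtains Q where "countable Q" "Q \<subseteq> \<D>" "\<And>D. D \<in> \<D> \<Longrightarrow> \<exists>q\<in>Q. dist D q < e"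
proof -
  obtain Q0 :: "'a set" where Q0: "countable Q0" "\<And>X. open X \<Longrightarrow> X \<noteq> {} \<Longrightarrow> \<exists>d\<in>Q0. d \<in> X"
    using countable_dense_setE by blast
  define pick where "pick q0 = (SOME p. p \<in> \<D> \<and> dist q0 p < e/2)" for q0
  define Q where "Q = pick ` {q0\<in>Q0. \<exists>p\<in>\<D>. dist q0 p < e/2}"
  have pk: "pick q0 \<in> \<D> \<and> dist q0 (pick q0) < e/2" if "\<exists>p\<in>\<D>. dist q0 p < e/2" for q0
    unfolding pick_def using that by (metis (mono_tags, lifting) someI_ex)
  show ?thesis
  proof
    show "countable Q" unfolding Q_def using Q0(1) by auto
    show "Q \<subseteq> \<D>" unfolding Q_def using pk by auto
    fix D assume D: "D \<in> \<D>"
    obtain q0 where q0: "q0 \<in> Q0" "q0 \<in> ball D (e/2)" using Q0(2)[of "ball D (e/2)"] assms by auto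
    have ex: "\<exists>p\<in>\<D>. dist q0 p < e/2" using D q0 by (auto simp: dist_commute intro!: bexI[of _ D])
    have "dist D (pick q0) \<le> dist D q0 + dist q0 (pick q0)" by (rule dist_triangle)
    also have "\<dots> < e" using pk[OF ex] q0 by simp
    finally show "\<exists>q\<in>Q. dist D q < e" using ex q0 unfolding Q_def by auto
  qed
qed

lemma prob_main:
  fixes P :: "(real^'m) measure" and g :: "real^'d \<Rightarrow> ereal" and \<D> :: "(real^'d^'m) set"
    and gbar :: "real \<Rightarrow> real"
  assumes sP: "sets P = sets borel"
    and L: "LP P gbar < ennreal L"
    and pm: "(\<lambda>x::real^'m. norm x * gbar ((norm x)^2/2)) \<in> borel_measurable borel"
    and pn: "\<And>x::real^'m. 0 \<le> norm x * gbar ((norm x)^2/2)"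
    and fm: "\<And>D. (\<lambda>x::real^'m. fx g x D) \<in> borel_measurable borel"
    and k: "k \<ge> 0" and \<epsilon>: "\<epsilon> > 0"
    and lip: "\<And>x D q. D \<in> \<D> \<Longrightarrow> q \<in> \<D> \<Longrightarrow> norm12 (D - q) \<le> \<epsilon> \<Longrightarrow>
                 \<bar>fx g x D - fx g x q\<bar> \<le> norm x * gbar ((norm x)^2/2) * k"
  shows "except_prob (sampleM P n) (Lambda_n P gbar n L + covN \<D> \<epsilon> * Gamma_n P g \<D> n \<gamma>)
           (\<lambda>X. \<forall>D\<in>\<D>. \<bar>FX g n X D - Ef P g D\<bar> \<le> 2 * L * k + \<gamma>)"
proof -
  define M where "M = sampleM P n"
  define \<phi> where "\<phi> = (\<lambda>x::real^'m. norm x * gbar ((norm x)^2/2))"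
  define A where "A = {X \<in> space M. L < LX gbar n X}"
  define B where "B q = {X \<in> space M. \<gamma> < \<bar>FX g n X q - Ef P g q\<bar>}" for q
  define \<Gamma> where "\<Gamma> = Gamma_n P g \<D> n \<gamma>"
  have \<Lambda>: "Lambda_n P gbar n L = emeasure M A" unfolding Lambda_n_def A_def M_def ..
  have B\<Gamma>: "emeasure M (B q) \<le> \<Gamma>" if "q \<in> \<D>" for q
    unfolding \<Gamma>_def Gamma_n_def B_def M_def using that by (intro SUP_upper) auto
  have mP: "measurable P borel = measurable borel borel" by (rule measurable_cong_sets[OF sP refl])
  have comp: "(\<lambda>X. X i) \<in> measurable M P" if "i < n" for i
    unfolding M_def sampleM_def using that by (intro measurable_component_singleton) auto
  have fmP: "(\<lambda>x. fx g x q) \<in> borel_measurable P" for q :: "real^'d^'m" unfolding mP by (rule fm)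
  have pmP: "(\<lambda>x::real^'m. norm x * gbar ((norm x)^2/2)) \<in> borel_measurable P" unfolding mP by (rule pm)
  have FXm: "(\<lambda>X. FX g n X q) \<in> borel_measurable M" for q :: "real^'d^'m"
  proof -
    have "(\<lambda>X. fx g (X i) q) \<in> borel_measurable M" if "i < n" for i
      by (rule measurable_compose[OF comp[OF that] fmP])
    hence "(\<lambda>X. \<Sum>i<n. fx g (X i) q) \<in> borel_measurable M" by (intro borel_measurable_sum) auto
    thus ?thesis unfolding FX_def by (intro borel_measurable_divide) auto
  qed
  have LXm: "(\<lambda>X. LX gbar n X) \<in> borel_measurable M"
  proof -
    have "(\<lambda>X. norm (X i) * gbar ((norm (X i))^2/2)) \<in> borel_measurable M" if "i < n" for i
      by (rule measurable_compose[OF comp[OF that] pmP])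
    hence "(\<lambda>X. \<Sum>i<n. norm (X i) * gbar ((norm (X i))^2/2)) \<in> borel_measurable M"
      by (intro borel_measurable_sum) auto
    thus ?thesis unfolding LX_def by (intro borel_measurable_divide) auto
  qed
  have Asets: "A \<in> sets M"
  proof -
    have "A = (\<lambda>X. LX gbar n X) -` {L<..} \<inter> space M" unfolding A_def by auto
    thus ?thesis using measurable_sets[OF LXm, of "{L<..}"] by simp
  qed
  have Bsets: "B q \<in> sets M" for q :: "real^'d^'m"
  proof -
    have m: "(\<lambda>X. \<bar>FX g n X q - Ef P g q\<bar>) \<in> borel_measurable M"
      by (intro borel_measurable_abs borel_measurable_diff FXm borel_measurable_const)
    have "B q = (\<lambda>X. \<bar>FX g n X q - Ef P g q\<bar>) -` {\<gamma><..} \<inter> space M" unfolding B_def by auto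
    thus ?thesis using measurable_sets[OF m, of "{\<gamma><..}"] by simp
  qed
  have Efl: "\<bar>Ef P g D - Ef P g q\<bar> \<le> L * k" if "D \<in> \<D>" "q \<in> \<D>" "norm12 (D - q) \<le> \<epsilon>" for D q
    unfolding Ef_def
  proof (rule int_lip[where \<phi> = \<phi>])
    show "(\<lambda>x. fx g x D) \<in> borel_measurable P" "(\<lambda>x. fx g x q) \<in> borel_measurable P"
      by (rule fmP)+
    show "\<phi> \<in> borel_measurable P" using pmP by (simp add: \<phi>_def)
    show "0 \<le> \<phi> x" for x using pn by (simp add: \<phi>_def)
    show "(\<integral>\<^sup>+ x. ennreal (\<phi> x) \<partial>P) < ennreal L" using L by (simp add: LP_def \<phi>_def)
    show "\<bar>fx g x D - fx g x q\<bar> \<le> \<phi> x * k" for x using lip[OF that] by (simp add: \<phi>_def)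
  qed (rule k)
  have FXl: "\<bar>FX g n X D - FX g n X q\<bar> \<le> LX gbar n X * k" if "D \<in> \<D>" "q \<in> \<D>" "norm12 (D - q) \<le> \<epsilon>" for X D q
  proof -
    have "\<bar>FX g n X D - FX g n X q\<bar> = \<bar>\<Sum>i<n. fx g (X i) D - fx g (X i) q\<bar> / real n"
      by (simp add: FX_def sum_subtractf diff_divide_distrib[symmetric])
    also have "\<dots> \<le> (\<Sum>i<n. norm (X i) * gbar ((norm (X i))^2/2) * k) / real n"
    proof (intro divide_right_mono)
      have "\<bar>\<Sum>i<n. fx g (X i) D - fx g (X i) q\<bar> \<le> (\<Sum>i<n. \<bar>fx g (X i) D - fx g (X i) q\<bar>)"
        by (rule sum_abs)
      also have "\<dots> \<le> (\<Sum>i<n. norm (X i) * gbar ((norm (X i))^2/2) * k)"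
        by (intro sum_mono lip[OF that])
      finally show "\<bar>\<Sum>i<n. fx g (X i) D - fx g (X i) q\<bar> \<le> (\<Sum>i<n. norm (X i) * gbar ((norm (X i))^2/2) * k)" .
    qed simp
    also have "\<dots> = LX gbar n X * k" by (simp add: LX_def sum_distrib_right)
    finally show ?thesis .
  qed
  have good: "\<bar>FX g n X D - Ef P g D\<bar> \<le> 2 * L * k + \<gamma>"
    if "D \<in> \<D>" "q \<in> \<D>" "norm12 (D - q) \<le> \<epsilon>" "LX gbar n X \<le> L" "\<bar>FX g n X q - Ef P g q\<bar> \<le> \<gamma>" for X D q
  proof -
    have "LX gbar n X * k \<le> L * k" using that(4) k by (rule mult_right_mono)
    thus ?thesis using FXl[OF that(1-3), of X] Efl[OF that(1-3)] that(5) by linarith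
  qed
  have net: "\<forall>X\<in>space M - (A \<union> (\<Union>q\<in>Q. B q)). \<forall>D\<in>\<D>. \<bar>FX g n X D - Ef P g D\<bar> \<le> 2 * L * k + \<gamma>"
    if Qs: "Q \<subseteq> \<D>" and Qc: "\<And>D. D \<in> \<D> \<Longrightarrow> \<exists>q\<in>Q. norm12 (D - q) \<le> \<epsilon>" for Q
  proof (intro ballI)
    fix X D assume X: "X \<in> space M - (A \<union> (\<Union>q\<in>Q. B q))" and D: "D \<in> \<D>"
    obtain q where q: "q \<in> Q" "norm12 (D - q) \<le> \<epsilon>" using Qc[OF D] by blast
    have "LX gbar n X \<le> L" using X by (auto simp: A_def)
    moreover have "\<bar>FX g n X q - Ef P g q\<bar> \<le> \<gamma>" using X q by (auto simp: B_def)
    ultimately show "\<bar>FX g n X D - Ef P g D\<bar> \<le> 2 * L * k + \<gamma>"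
      using good[OF D _ q(2)] q Qs by auto
  qed
  show ?thesis
    unfolding M_def[symmetric] \<Gamma>_def[symmetric] \<Lambda> except_prob_def
  proof (cases "\<Gamma> = 0")
    case True
    obtain Q where Q: "countable Q" "Q \<subseteq> \<D>" "\<And>D. D \<in> \<D> \<Longrightarrow> \<exists>q\<in>Q. dist D q < \<epsilon>"
      using countable_net[OF \<epsilon>] by blast
    have cov: "\<exists>q\<in>Q. norm12 (D - q) \<le> \<epsilon>" if DD: "D \<in> \<D>" for D
    proof -
      obtain q where "q \<in> Q" "dist D q < \<epsilon>" using Q(3)[OF DD] by blast
      moreover have "norm12 (D - q) \<le> dist D q" using norm12_le_norm by (simp add: dist_norm)
      ultimately show ?thesis by force
    qed
    have nul: "(\<Union>q\<in>Q. B q) \<in> null_sets M"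
    proof (rule null_sets_UN'[OF Q(1)])
      fix q assume "q \<in> Q"
      hence "emeasure M (B q) = 0" using B\<Gamma>[of q] Q(2) True by auto
      thus "B q \<in> null_sets M" using Bsets by (auto intro: null_setsI)
    qed
    show "\<exists>E\<in>sets M. emeasure M E \<le> emeasure M A + covN \<D> \<epsilon> * \<Gamma> \<and>
            (\<forall>X\<in>space M - E. \<forall>D\<in>\<D>. \<bar>FX g n X D - Ef P g D\<bar> \<le> 2 * L * k + \<gamma>)"
    proof (intro bexI conjI)
      show "A \<union> (\<Union>q\<in>Q. B q) \<in> sets M" using Asets nul by auto
      have "emeasure M (A \<union> (\<Union>q\<in>Q. B q)) \<le> emeasure M A + emeasure M (\<Union>q\<in>Q. B q)"
        using Asets nul by (intro emeasure_subadditive) auto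
      also have "\<dots> = emeasure M A" using nul by auto
      finally show "emeasure M (A \<union> (\<Union>q\<in>Q. B q)) \<le> emeasure M A + covN \<D> \<epsilon> * \<Gamma>"
        using True by simp
      show "\<forall>X\<in>space M - (A \<union> (\<Union>q\<in>Q. B q)). \<forall>D\<in>\<D>. \<bar>FX g n X D - Ef P g D\<bar> \<le> 2 * L * k + \<gamma>"
        by (rule net[OF Q(2) cov])
    qed
  next
    case G: False
    show "\<exists>E\<in>sets M. emeasure M E \<le> emeasure M A + covN \<D> \<epsilon> * \<Gamma> \<and>
            (\<forall>X\<in>space M - E. \<forall>D\<in>\<D>. \<bar>FX g n X D - Ef P g D\<bar> \<le> 2 * L * k + \<gamma>)"
    proof (cases "covN \<D> \<epsilon> = \<top>")
      case True
      show ?thesis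
        by (intro bexI[of _ "space M"]) (auto simp: True G ennreal_top_mult_right)
    next
      case False
      define S where "S = {Q. finite Q \<and> Q \<subseteq> \<D> \<and> (\<forall>D\<in>\<D>. \<exists>q\<in>Q. norm12 (D - q) \<le> \<epsilon>)}"
      have cN: "covN \<D> \<epsilon> = (INF Q\<in>S. of_nat (card Q))" unfolding covN_def S_def ..
      have "S \<noteq> {}" using False cN by auto
      then obtain Q1 where "Q1 \<in> S" by auto
      define m where "m = (LEAST c. \<exists>Q\<in>S. card Q = c)"
      have "\<exists>Q\<in>S. card Q = m" unfolding m_def by (rule LeastI_ex) (use \<open>Q1 \<in> S\<close> in auto)
      then obtain Q where QS: "Q \<in> S" and cQ: "card Q = m" by blast
      have "covN \<D> \<epsilon> = of_nat (card Q)"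
      proof (rule antisym)
        show "covN \<D> \<epsilon> \<le> of_nat (card Q)" unfolding cN using QS by (rule INF_lower)
        show "of_nat (card Q) \<le> covN \<D> \<epsilon>" unfolding cN
        proof (rule INF_greatest)
          fix Q' assume "Q' \<in> S"
          hence "m \<le> card Q'" unfolding m_def by (intro Least_le) auto
          thus "of_nat (card Q) \<le> (of_nat (card Q') :: ennreal)" using cQ by simp
        qed
      qed
      hence cNQ: "covN \<D> \<epsilon> = of_nat (card Q)" .
      have Qf: "finite Q" "Q \<subseteq> \<D>" "\<And>D. D \<in> \<D> \<Longrightarrow> \<exists>q\<in>Q. norm12 (D - q) \<le> \<epsilon>"
        using QS by (auto simp: S_def)
      show ?thesis
      proof (intro bexI conjI)
        show "A \<union> (\<Union>q\<in>Q. B q) \<in> sets M" using Asets Bsets Qf(1) by auto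
        have "emeasure M (A \<union> (\<Union>q\<in>Q. B q)) \<le> emeasure M A + emeasure M (\<Union>q\<in>Q. B q)"
          using Asets Bsets Qf(1) by (intro emeasure_subadditive) auto
        also have "emeasure M (\<Union>q\<in>Q. B q) \<le> (\<Sum>q\<in>Q. emeasure M (B q))"
          using Bsets Qf(1) by (intro emeasure_subadditive_finite) auto
        also have "\<dots> \<le> (\<Sum>q\<in>Q. \<Gamma>)" using B\<Gamma> Qf(2) by (intro sum_mono) auto
        also have "\<dots> = covN \<D> \<epsilon> * \<Gamma>" by (simp add: cNQ)
        finally show "emeasure M (A \<union> (\<Union>q\<in>Q. B q)) \<le> emeasure M A + covN \<D> \<epsilon> * \<Gamma>"
          by (simp add: add_left_mono)
        show "\<forall>X\<in>space M - (A \<union> (\<Union>q\<in>Q. B q)). \<forall>D\<in>\<D>. \<bar>FX g n X D - Ef P g D\<bar> \<le> 2 * L * k + \<gamma>"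
          by (rule net[OF Qf(2,3)])
      qed
    qed
  qed
qed


lemma condA_pm:
  assumes A: "condA g"
  shows "(\<lambda>x::real^'m. norm x * gbarA g ((norm x)^2/2)) \<in> borel_measurable borel"
proof -
  define h where "h t = gbarA g (max 0 t)" for t
  have "mono h" unfolding h_def mono_def by (auto intro!: condA_gbar_mono[OF A])
  hence hm: "h \<in> borel_measurable borel" by (rule borel_measurable_mono)
  have "(\<lambda>x::real^'m. h ((norm x)^2/2)) \<in> borel_measurable borel"
    by (rule measurable_compose[OF _ hm]) (intro borel_measurable_continuous_onI continuous_intros, auto)
  hence "(\<lambda>x::real^'m. norm x * h ((norm x)^2/2)) \<in> borel_measurable borel"
    by (intro borel_measurable_times) (auto intro: borel_measurable_continuous_onI continuous_intros)
  moreover have "h ((norm x)^2/2) = gbarA g ((norm x)^2/2)" for x :: "real^'m"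
    by (simp add: h_def max_def)
  ultimately show ?thesis by simp
qed

lemma gbarB_pm:
  shows "(\<lambda>x::real^'m. norm x * gbarB \<kappa> ((norm x)^2/2)) \<in> borel_measurable borel"
  unfolding gbarB_def divide_inverse by (intro borel_measurable_continuous_onI continuous_intros)

lemma pen_fm: "pen g \<Longrightarrow> (\<lambda>x::real^'m. fx g x D) \<in> borel_measurable borel"
  by (intro borel_measurable_continuous_onI pen.fx_cont)

theorem mainTheorem12:
  fixes P :: "(real^'m) measure" and g :: "real^'d \<Rightarrow> ereal"
    and \<D> :: "(real^'d^'m) set" and gbar :: "real \<Rightarrow> real"
    and L \<epsilon> \<gamma> :: real and n :: nat
  assumes "prob_space P" and "sets P = sets borel"
    and C1: "LP P gbar < \<infinity>"
    and C2: "condC2 P g \<D>"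
    and L: "LP P gbar < ennreal L"
    and "\<epsilon> > 0" and "\<gamma> > 0"
  shows "(((condA g \<and> gbar = gbarA g)
           \<or> (\<exists>\<kappa> K. condB123 g \<D> \<kappa> K \<and> convex \<D> \<and> gbar = gbarB \<kappa>))
         \<longrightarrow> except_prob (sampleM P n)
               (Lambda_n P gbar n L + covN \<D> \<epsilon> * Gamma_n P g \<D> n \<gamma>)
               (\<lambda>X. \<forall>D\<in>\<D>. \<bar>FX g n X D - Ef P g D\<bar> \<le> 2 * L * \<epsilon> + \<gamma>))
       \<and> (\<forall>\<kappa> K. condB123 g \<D> \<kappa> K \<and> gbar = gbarB \<kappa>
         \<longrightarrow> except_prob (sampleM P n)
               (Lambda_n P gbar n L + covN \<D> \<epsilon> * Gamma_n P g \<D> n \<gamma>)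
               (\<lambda>X. \<forall>D\<in>\<D>. \<bar>FX g n X D - Ef P g D\<bar> \<le> 2 * L * \<epsilon> * (1 + \<epsilon> / sqrt \<kappa>) + \<gamma>))"
proof (intro conjI impI allI)
  have sP: "sets P = sets borel" and e: "\<epsilon> > 0" using assms by auto
  assume H: "(condA g \<and> gbar = gbarA g) \<or> (\<exists>\<kappa> K. condB123 g \<D> \<kappa> K \<and> convex \<D> \<and> gbar = gbarB \<kappa>)"
  show "except_prob (sampleM P n) (Lambda_n P gbar n L + covN \<D> \<epsilon> * Gamma_n P g \<D> n \<gamma>)
          (\<lambda>X. \<forall>D\<in>\<D>. \<bar>FX g n X D - Ef P g D\<bar> \<le> 2 * L * \<epsilon> + \<gamma>)"
    using H
  proof
    assume A: "condA g \<and> gbar = gbarA g"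
    have "except_prob (sampleM P n) (Lambda_n P gbar n L + covN \<D> \<epsilon> * Gamma_n P g \<D> n \<gamma>)
          (\<lambda>X. \<forall>D\<in>\<D>. \<bar>FX g n X D - Ef P g D\<bar> \<le> 2 * L * \<epsilon> + \<gamma>)"
    proof (rule prob_main[OF sP L _ _ _ _ e])
      show "(\<lambda>x::real^'m. norm x * gbar ((norm x)^2/2)) \<in> borel_measurable borel"
        using condA_pm A by auto
      show "0 \<le> norm x * gbar ((norm x)^2/2)" for x :: "real^'m"
        using condA_gbar_nonneg[of g "(norm x)^2/2"] A by auto
      show "(\<lambda>x::real^'m. fx g x D) \<in> borel_measurable borel" for D
        using pen_fm condA_pen A by blast
      show "0 \<le> \<epsilon>" using e by simp
      show "\<bar>fx g x D - fx g x q\<bar> \<le> norm x * gbar ((norm x)^2/2) * \<epsilon>"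
        if "norm12 (D - q) \<le> \<epsilon>" for x D q
        using lipA[of g D q \<epsilon> x] A that by simp
    qed
    thus ?thesis .
  next
    assume "\<exists>\<kappa> K. condB123 g \<D> \<kappa> K \<and> convex \<D> \<and> gbar = gbarB \<kappa>"
    then obtain \<kappa> K where B: "condB123 g \<D> \<kappa> K" "convex \<D>" "gbar = gbarB \<kappa>" by blast
    have k: "\<kappa> > 0" using B by (simp add: condB123_def)
    show ?thesis
    proof (rule prob_main[OF sP L _ _ _ _ e])
      show "(\<lambda>x::real^'m. norm x * gbar ((norm x)^2/2)) \<in> borel_measurable borel"
        using gbarB_pm B by auto
      show "0 \<le> norm x * gbar ((norm x)^2/2)" for x :: "real^'m"
        using gbarB_nonneg[OF k, of "(norm x)^2/2"] B by auto
      show "(\<lambda>x::real^'m. fx g x D) \<in> borel_measurable borel" for D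
        using pen_fm condB_pen B by blast
      show "0 \<le> \<epsilon>" using e by simp
      show "\<bar>fx g x D - fx g x q\<bar> \<le> norm x * gbar ((norm x)^2/2) * \<epsilon>"
        if "D \<in> \<D>" "q \<in> \<D>" "norm12 (D - q) \<le> \<epsilon>" for x D q
        using lipB4[OF B(1,2) that, of x] B by simp
    qed
  qed
next
  fix \<kappa> K
  have sP: "sets P = sets borel" and e: "\<epsilon> > 0" using assms by auto
  assume B: "condB123 g \<D> \<kappa> K \<and> gbar = gbarB \<kappa>"
  have k: "\<kappa> > 0" using B by (simp add: condB123_def)
  have "except_prob (sampleM P n) (Lambda_n P gbar n L + covN \<D> \<epsilon> * Gamma_n P g \<D> n \<gamma>)
          (\<lambda>X. \<forall>D\<in>\<D>. \<bar>FX g n X D - Ef P g D\<bar> \<le> 2 * L * (\<epsilon> * (1 + \<epsilon> / sqrt \<kappa>)) + \<gamma>)"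
  proof (rule prob_main[OF sP L _ _ _ _ e])
    show "(\<lambda>x::real^'m. norm x * gbar ((norm x)^2/2)) \<in> borel_measurable borel"
      using gbarB_pm B by auto
    show "0 \<le> norm x * gbar ((norm x)^2/2)" for x :: "real^'m"
      using gbarB_nonneg[OF k, of "(norm x)^2/2"] B by auto
    show "(\<lambda>x::real^'m. fx g x D) \<in> borel_measurable borel" for D
      using pen_fm condB_pen B by blast
    show "0 \<le> \<epsilon> * (1 + \<epsilon> / sqrt \<kappa>)" using e k by (simp add: add_nonneg_nonneg)
    show "\<bar>fx g x D - fx g x q\<bar> \<le> norm x * gbar ((norm x)^2/2) * (\<epsilon> * (1 + \<epsilon> / sqrt \<kappa>))"
      if "D \<in> \<D>" "q \<in> \<D>" "norm12 (D - q) \<le> \<epsilon>" for x D q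
      using lipB[of g \<D> \<kappa> K D q \<epsilon> x] B that by (simp add: mult.assoc)
  qed
  thus "except_prob (sampleM P n) (Lambda_n P gbar n L + covN \<D> \<epsilon> * Gamma_n P g \<D> n \<gamma>)
          (\<lambda>X. \<forall>D\<in>\<D>. \<bar>FX g n X D - Ef P g D\<bar> \<le> 2 * L * \<epsilon> * (1 + \<epsilon> / sqrt \<kappa>) + \<gamma>)"
    by (simp add: mult.assoc)
qed

end
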